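(* Let $W,V$ be subspaces of $\mathbb{R}^n$ with $\mathbb{R}^n=W\oplus V^\perp$, where $W$ has dimension $d_W$. Suppose $\mu\in\mathcal{P}_2(W)$ is a probabilistic frame for $W$ with frame operator $\mathbf{S}_\mu$, and $T:W\to V$ is measurable such that $T_\#\mu$ is an oblique dual probabilistic frame of $\mu$ on $V$ with respect to the coupling $(\mathbf{Id},T)_\#\mu$, i.e. $T_\#\mu\in\mathcal{P}_2(V)$ and $\int_W\mathbf{x}\,T(\mathbf{x})^t\,d\mu(\mathbf{x})=\boldsymbol{\pi}_{WV^\perp}$. Then $$\int_W\int_W|\langle\mathbf{x},T(\mathbf{y})\rangle|^2\,d\mu(\mathbf{x})\,d\mu(\mathbf{y})\ge d_W,$$ and equality holds if and only if $T(\mathbf{y})=\boldsymbol{\pi}_{VW^\perp}\mathbf{S}_\mu^\dagger\mathbf{y}$ for $\mu$-almost all $\mathbf{y}\in W$.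
   Context: $\mathcal{P}_2(S)$ denotes Borel probability measures on $\mathbb{R}^n$ concentrated on the subspace $S$ with finite second moment. $\mu\in\mathcal{P}_2(W)$ is a probabilistic frame for $W$ if there exist $0<A\le B<\infty$ with $A\|\mathbf{x}\|^2\le\int_W|\langle\mathbf{x},\mathbf{y}\rangle|^2d\mu(\mathbf{y})\le B\|\mathbf{x}\|^2$ for all $\mathbf{x}\in W$; its frame operator is $\mathbf{S}_\mu=\int_W\mathbf{y}\mathbf{y}^td\mu(\mathbf{y})$, with Moore–Penrose inverse $\mathbf{S}_\mu^\dagger$. $T_\#\mu(E)=\mu(T^{-1}(E))$; $(\mathbf{Id},T)_\#\mu$ is the pushforward of $\mu$ under $\mathbf{x}\mapsto(\mathbf{x},T(\mathbf{x}))$. $\boldsymbol{\pi}_{WV^\perp}$ is the oblique projection onto $W$ along $V^\perp$ and $\boldsymbol{\pi}_{VW^\perp}$ the oblique projection onto $V$ along $W^\perp$. *)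

theory Defs
  imports "HOL-Probability.Probability"
begin

definition oblique_proj :: "(real^'n) set \<Rightarrow> (real^'n) set \<Rightarrow> real^'n^'n" where
  "oblique_proj W U = matrix (\<lambda>x. THE w. w \<in> W \<and> x - w \<in> U)"

definition mp_inverse :: "real^'n^'n \<Rightarrow> real^'n^'n" where
  "mp_inverse A = (THE B. A ** B ** A = A \<and> B ** A ** B = B \<and>
      transpose (A ** B) = A ** B \<and> transpose (B ** A) = B ** A)"

definition outer :: "real^'n \<Rightarrow> real^'n \<Rightarrow> real^'n^'n" where
  "outer x y = (\<chi> i j. x $ i * y $ j)"

definition frame_operator :: "(real^'n) measure \<Rightarrow> real^'n^'n" where
  "frame_operator \<mu> = integral\<^sup>L \<mu> (\<lambda>y. outer y y)"

definition P2 :: "(real^'n) set \<Rightarrow> (real^'n) measure \<Rightarrow> bool" where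
  "P2 S \<mu> \<longleftrightarrow> prob_space \<mu> \<and> sets \<mu> = sets borel \<and> (AE x in \<mu>. x \<in> S)
      \<and> integrable \<mu> (\<lambda>x. norm x ^ 2)"

definition prob_frame :: "(real^'n) set \<Rightarrow> (real^'n) measure \<Rightarrow> bool" where
  "prob_frame W \<mu> \<longleftrightarrow> P2 W \<mu> \<and> (\<exists>A B. 0 < A \<and> A \<le> B \<and>
      (\<forall>x\<in>W. A * norm x ^ 2 \<le> integral\<^sup>L \<mu> (\<lambda>y. \<bar>x \<bullet> y\<bar> ^ 2)
             \<and> integral\<^sup>L \<mu> (\<lambda>y. \<bar>x \<bullet> y\<bar> ^ 2) \<le> B * norm x ^ 2))"

end

theory Submission
  imports Defs
begin

definition pairm :: "real^'n^'n \<Rightarrow> real^'n^'n \<Rightarrow> real" where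
  "pairm X Y = (\<Sum>i\<in>UNIV. \<Sum>j\<in>UNIV. X$i$j * Y$i$j)"
lemma pairm_transpose_left: "pairm (transpose X ** Y) Z = pairm Y (X ** Z)"
proof -
  have "pairm (transpose X ** Y) Z = (\<Sum>i\<in>UNIV. \<Sum>j\<in>UNIV. \<Sum>k\<in>UNIV. X$k$i * Y$k$j * Z$i$j)"
    by (simp add: pairm_def matrix_matrix_mult_def transpose_def sum_distrib_right)
  also have "\<dots> = (\<Sum>i\<in>UNIV. \<Sum>k\<in>UNIV. \<Sum>j\<in>UNIV. X$k$i * Y$k$j * Z$i$j)"
    by (rule sum.cong[OF refl], rule sum.swap)
  also have "\<dots> = (\<Sum>k\<in>UNIV. \<Sum>i\<in>UNIV. \<Sum>j\<in>UNIV. X$k$i * Y$k$j * Z$i$j)"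
    by (rule sum.swap)
  also have "\<dots> = (\<Sum>k\<in>UNIV. \<Sum>j\<in>UNIV. \<Sum>i\<in>UNIV. X$k$i * Y$k$j * Z$i$j)"
    by (rule sum.cong[OF refl], rule sum.swap)
  also have "\<dots> = pairm Y (X ** Z)"
    by (simp add: pairm_def matrix_matrix_mult_def sum_distrib_left ac_simps)
  finally show ?thesis .
qed
lemma norm_outer: "norm (outer a b) = norm a * norm b"
proof -
  have e: "\<And>i. (\<chi> j. a$i * b$j) = a$i *\<^sub>R b" by (simp add: vec_eq_iff)
  have "norm (outer a b) = L2_set (\<lambda>i. norm (a$i) * norm b) UNIV"
    unfolding norm_vec_def[of "outer a b"] by (simp add: outer_def e)
  also have "\<dots> = norm b * norm a"
    by (simp add: norm_vec_def[of a] L2_set_right_distrib mult.commute)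
  finally show ?thesis by simp
qed
lemma inner_transpose: "x \<bullet> (transpose A *v z) = (A *v x) \<bullet> (z::real^'n)"
  by (metis dot_lmul_matrix inner_commute transpose_matrix_vector)
lemma inner_K: "a \<bullet> (K *v b) = pairm K (outer a b)"
  by (simp add: pairm_def outer_def inner_vec_def matrix_vector_mult_def sum_distrib_left ac_simps)

lemma pairm_outer: "pairm (outer u v) C = u \<bullet> (C *v v)"
  by (simp add: pairm_def outer_def inner_vec_def matrix_vector_mult_def sum_distrib_left ac_simps)

lemma pairm_sym: "pairm X Y = pairm Y X"
  by (simp add: pairm_def mult.commute)

lemma pairm_sum_left: "pairm (sum f B) X = (\<Sum>b\<in>B. pairm (f b) X)"
proof -
  have "pairm (sum f B) X = (\<Sum>i\<in>UNIV. \<Sum>j\<in>UNIV. \<Sum>b\<in>B. f b $ i $ j * X $ i $ j)"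
    by (simp add: pairm_def sum_distrib_right)
  also have "\<dots> = (\<Sum>i\<in>UNIV. \<Sum>b\<in>B. \<Sum>j\<in>UNIV. f b $ i $ j * X $ i $ j)"
    by (rule sum.cong[OF refl], rule sum.swap)
  also have "\<dots> = (\<Sum>b\<in>B. \<Sum>i\<in>UNIV. \<Sum>j\<in>UNIV. f b $ i $ j * X $ i $ j)"
    by (rule sum.swap)
  also have "\<dots> = (\<Sum>b\<in>B. pairm (f b) X)" by (simp add: pairm_def)
  finally show ?thesis .
qed

lemma pairm_bl: "bounded_linear (pairm K)"
proof -
  have "linear (pairm K)"
    by (rule linearI) (simp_all add: pairm_def algebra_simps sum.distrib sum_distrib_left)
  then show ?thesis using linear_conv_bounded_linear by blast
qed

lemma transpose_char:
  fixes A B :: "real^'n^'n"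
  assumes "\<And>x z. x \<bullet> (A *v z) = (B *v x) \<bullet> z"
  shows "transpose A = B"
proof -
  have "\<And>x z. (transpose A *v x) \<bullet> z = (B *v x) \<bullet> z"
    using assms by (simp add: dot_lmul_matrix)
  then have "\<And>x. (transpose A *v x - B *v x) \<bullet> (transpose A *v x - B *v x) = 0"
    by (simp add: inner_diff_left)
  then have "\<And>x. transpose A *v x - B *v x = 0"
    using inner_eq_zero_iff by blast
  then show ?thesis by (simp add: matrix_eq)
qed

lemma sym_char:
  fixes A :: "real^'n^'n"
  assumes "\<And>x z. x \<bullet> (A *v z) = (A *v x) \<bullet> z"
  shows "transpose A = A"
  using transpose_char assms by blast

lemma mem_oc: "x \<in> orthogonal_comp W \<longleftrightarrow> (\<forall>y\<in>W. y \<bullet> x = 0)"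
  by (simp add: orthogonal_comp_def orthogonal_def)

definition obf :: "(real^'n) set \<Rightarrow> (real^'n) set \<Rightarrow> real^'n \<Rightarrow> real^'n" where
  "obf A U x = (THE w. w \<in> A \<and> x - w \<in> U)"

locale dsum =
  fixes A U :: "(real^'n) set"
  assumes sA: "subspace A" and sU: "subspace U" and int0: "A \<inter> U = {0}" and plusU: "A + U = UNIV"
begin

lemma ex1: "\<exists>!w. w \<in> A \<and> x - w \<in> U"
proof -
  have "x \<in> A + U" using plusU by simp
  then obtain a u where "x = a + u" "a \<in> A" "u \<in> U" by (rule set_plus_elim)
  then have ex: "a \<in> A \<and> x - a \<in> U" by simp
  show ?thesis
  proof (rule ex1I[of _ a])
    show "a \<in> A \<and> x - a \<in> U" by fact
    fix w assume w: "w \<in> A \<and> x - w \<in> U"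
    have "w - a \<in> A" using w ex sA by (simp add: subspace_diff)
    moreover have "w - a = (x - a) - (x - w)" by simp
    then have "w - a \<in> U" using w ex sU by (metis subspace_diff)
    ultimately have "w - a \<in> A \<inter> U" by blast
    then show "w = a" using int0 by simp
  qed
qed

lemma obf: "obf A U x \<in> A" "x - obf A U x \<in> U"
  using theI'[OF ex1[of x]] unfolding obf_def by auto

lemma obf_eq: "w \<in> A \<Longrightarrow> x - w \<in> U \<Longrightarrow> obf A U x = w"
  unfolding obf_def using ex1[of x] by (rule the1_equality) simp

lemma obf_linear: "linear (obf A U)"
proof (rule linearI)
  fix x y
  show "obf A U (x + y) = obf A U x + obf A U y"
  proof (rule obf_eq)
    show "obf A U x + obf A U y \<in> A" using obf sA by (simp add: subspace_add)
    have "x + y - (obf A U x + obf A U y) = (x - obf A U x) + (y - obf A U y)" by simp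
    then show "x + y - (obf A U x + obf A U y) \<in> U" using obf sU by (metis subspace_add)
  qed
next
  fix c :: real and x
  show "obf A U (c *\<^sub>R x) = c *\<^sub>R obf A U x"
  proof (rule obf_eq)
    show "c *\<^sub>R obf A U x \<in> A" using obf sA by (simp add: subspace_scale)
    have "c *\<^sub>R x - c *\<^sub>R obf A U x = c *\<^sub>R (x - obf A U x)" by (simp add: algebra_simps)
    then show "c *\<^sub>R x - c *\<^sub>R obf A U x \<in> U" using obf sU by (metis subspace_scale)
  qed
qed

lemma op_apply: "oblique_proj A U *v x = obf A U x"
proof -
  have "Vector_Spaces.linear (*s) (*s) (obf A U)"
    using obf_linear linear_matrix_vector_mul_eq by blast
  then have "matrix (obf A U) *v x = obf A U x" by (rule matrix_works)
  moreover have "oblique_proj A U = matrix (obf A U)"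
    unfolding oblique_proj_def by (rule arg_cong[where f=matrix]) (simp add: fun_eq_iff obf_def)
  ultimately show ?thesis by simp
qed

lemma op_in: "oblique_proj A U *v x \<in> A" "x - oblique_proj A U *v x \<in> U"
  using obf op_apply by auto

lemma op_eq: "w \<in> A \<Longrightarrow> x - w \<in> U \<Longrightarrow> oblique_proj A U *v x = w"
  using obf_eq op_apply by auto
end
lemma ab_le:
  fixes a b :: real assumes "0 \<le> a" "0 \<le> b" shows "a * b \<le> a^2 + b^2"
proof -
  have "0 \<le> (a - b)^2" by simp
  moreover have "(a - b)^2 = a^2 + b^2 - 2*a*b" by (simp add: power2_diff)
  moreover have "0 \<le> a * b" using assms by simp
  ultimately show ?thesis by linarith
qed

lemma ax2: "axis x (axis y (1::real)) $ i $ j = (if y = j then (if x = i then 1 else 0) else 0)"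
  by (auto simp add: axis_def)
lemma outer_sum: "outer a b = (\<Sum>i\<in>UNIV. \<Sum>j\<in>UNIV. (a$i * b$j) *\<^sub>R axis i (axis j (1::real)))"
  by (simp add: outer_def vec_eq_iff ax2 if_distrib[of "(*) _"] sum.delta cong: if_cong)


lemma meas_outer:
  fixes f g :: "'a \<Rightarrow> real^'n"
  assumes [measurable]: "f \<in> borel_measurable M" "g \<in> borel_measurable M"
  shows "(\<lambda>x. outer (f x) (g x)) \<in> borel_measurable M"
proof -
  have [measurable]: "(\<lambda>x. f x $ i) \<in> borel_measurable M" "(\<lambda>x. g x $ i) \<in> borel_measurable M" for i
    using measurable_compose[OF assms(1) borel_measurable_nth] measurable_compose[OF assms(2) borel_measurable_nth] by auto
  show ?thesis unfolding outer_sum by measurable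
qed

lemma L2X:
  fixes f g :: "'a \<Rightarrow> real^'n"
  assumes [measurable]: "f \<in> borel_measurable M" "g \<in> borel_measurable M"
    and i1: "integrable M (\<lambda>x. norm (f x)^2)" and i2: "integrable M (\<lambda>x. norm (g x)^2)"
  shows "integrable M (\<lambda>x. outer (f x) (g x))"
    and "integrable M (\<lambda>x. f x \<bullet> (K *v g x))"
    and "(\<integral>x. f x \<bullet> (K *v g x) \<partial>M) = pairm K (\<integral>x. outer (f x) (g x) \<partial>M)"
proof -
  have ib: "integrable M (\<lambda>x. norm (f x)^2 + norm (g x)^2)" using i1 i2 by simp
  show io: "integrable M (\<lambda>x. outer (f x) (g x))"
  proof (rule Bochner_Integration.integrable_bound[OF ib meas_outer[OF assms(1,2)]])
    show "AE x in M. norm (outer (f x) (g x)) \<le> norm (norm (f x)^2 + norm (g x)^2)"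
    proof (rule AE_I2)
      fix x
      have "norm (f x) * norm (g x) \<le> norm (f x)^2 + norm (g x)^2"
        by (rule ab_le) simp_all
      then show "norm (outer (f x) (g x)) \<le> norm (norm (f x)^2 + norm (g x)^2)"
        by (simp add: norm_outer)
    qed
  qed
  have e: "(\<lambda>x. f x \<bullet> (K *v g x)) = (\<lambda>x. pairm K (outer (f x) (g x)))"
    by (simp add: inner_K)
  show "integrable M (\<lambda>x. f x \<bullet> (K *v g x))"
    unfolding e by (rule integrable_bounded_linear[OF pairm_bl io])
  show "(\<integral>x. f x \<bullet> (K *v g x) \<partial>M) = pairm K (\<integral>x. outer (f x) (g x) \<partial>M)"
    unfolding e by (rule integral_bounded_linear[OF pairm_bl io])
qed
lemma mp_unique:
  fixes A B C :: "real^'n^'n"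
  assumes b1: "A ** B ** A = A" and b2: "B ** A ** B = B" and b3: "transpose (A ** B) = A ** B" and b4: "transpose (B ** A) = B ** A"
    and c1: "A ** C ** A = A" and c2: "C ** A ** C = C" and c3: "transpose (A ** C) = A ** C" and c4: "transpose (C ** A) = C ** A"
  shows "B = C"
proof -
  have "B = B ** (A ** B)" using b2 by (simp add: matrix_mul_assoc)
  also have "\<dots> = B ** transpose (A ** B)" using b3 by simp
  also have "\<dots> = B ** transpose ((A ** C ** A) ** B)" using c1 by simp
  also have "\<dots> = B ** transpose ((A ** C) ** (A ** B))" by (simp add: matrix_mul_assoc)
  also have "\<dots> = B ** (transpose (A ** B) ** transpose (A ** C))" by (simp add: matrix_transpose_mul)
  also have "\<dots> = B ** ((A ** B) ** (A ** C))" using b3 c3 by simp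
  also have "\<dots> = B ** ((A ** B ** A) ** C)" by (simp add: matrix_mul_assoc)
  also have "\<dots> = B ** A ** C" using b1 by (simp add: matrix_mul_assoc)
  finally have 1: "B = B ** A ** C" .
  have "C = (C ** A) ** C" using c2 by (simp add: matrix_mul_assoc)
  also have "\<dots> = transpose (C ** A) ** C" using c4 by simp
  also have "\<dots> = transpose (C ** (A ** B ** A)) ** C" using b1 by simp
  also have "\<dots> = transpose ((C ** A) ** (B ** A)) ** C" by (simp add: matrix_mul_assoc)
  also have "\<dots> = (transpose (B ** A) ** transpose (C ** A)) ** C" by (simp add: matrix_transpose_mul)
  also have "\<dots> = ((B ** A) ** (C ** A)) ** C" using b4 c4 by simp
  also have "\<dots> = B ** (A ** C ** A) ** C" by (simp add: matrix_mul_assoc)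
  also have "\<dots> = B ** A ** C" using c1 by (simp add: matrix_mul_assoc)
  finally have 2: "C = B ** A ** C" .
  show ?thesis using 1 2 by simp
qed

lemma mp_inverse_eq:
  fixes A B :: "real^'n^'n"
  assumes "A ** B ** A = A" "B ** A ** B = B" "transpose (A ** B) = A ** B" "transpose (B ** A) = B ** A"
  shows "mp_inverse A = B"
  unfolding mp_inverse_def
proof (rule the_equality)
  show "A ** B ** A = A \<and> B ** A ** B = B \<and> transpose (A ** B) = A ** B \<and> transpose (B ** A) = B ** A"
    using assms by blast
  fix C assume "A ** C ** A = A \<and> C ** A ** C = C \<and> transpose (A ** C) = A ** C \<and> transpose (C ** A) = C ** A"
  then show "C = B" using mp_unique[of A C B] assms by blast
qed
locale mpctx =
  fixes W :: "(real^'n) set" and S Pi :: "real^'n^'n"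
  assumes sW: "subspace W"
    and Pi1: "\<And>x. Pi *v x \<in> W" and Pi2: "\<And>x. x - Pi *v x \<in> orthogonal_comp W"
    and S1: "\<And>x. S *v x \<in> W" and S2: "\<And>v. v \<in> orthogonal_comp W \<Longrightarrow> S *v v = 0"
    and S3: "\<And>w. w \<in> W \<Longrightarrow> S *v w = 0 \<Longrightarrow> w = 0"
begin

lemma WWc: "w \<in> W \<Longrightarrow> w \<in> orthogonal_comp W \<Longrightarrow> w = 0"
proof -
  assume a: "w \<in> W" and b: "w \<in> orthogonal_comp W"
  from b have "w \<bullet> w = 0" using a by (simp add: mem_oc)
  then show "w = 0" by simp
qed

lemma Pi_id: "w \<in> W \<Longrightarrow> Pi *v w = w"
proof -
  assume w: "w \<in> W"
  have "w - Pi *v w \<in> W" using w Pi1 sW by (simp add: subspace_diff)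
  then have "w - Pi *v w = 0" using Pi2 WWc by blast
  then show ?thesis by simp
qed

lemma Pi_zero: "v \<in> orthogonal_comp W \<Longrightarrow> Pi *v v = 0"
proof -
  assume v: "v \<in> orthogonal_comp W"
  have "Pi *v v = v - (v - Pi *v v)" by simp
  also have "\<dots> \<in> orthogonal_comp W"
    using v Pi2[of v] subspace_orthogonal_comp by (metis subspace_diff)
  finally show ?thesis using Pi1 WWc by blast
qed

lemma Pi_sym: "transpose Pi = Pi"
proof (rule sym_char)
  fix x z :: "real^'n"
  have a: "x - Pi *v x \<in> orthogonal_comp W" "z - Pi *v z \<in> orthogonal_comp W" using Pi2 by auto
  have "x \<bullet> (Pi *v z) = (Pi *v x) \<bullet> (Pi *v z) + (x - Pi *v x) \<bullet> (Pi *v z)"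
    by (simp add: inner_diff_left)
  also have "(x - Pi *v x) \<bullet> (Pi *v z) = 0" using a Pi1 by (simp add: mem_oc inner_commute)
  also have "(Pi *v x) \<bullet> z = (Pi *v x) \<bullet> (Pi *v z) + (Pi *v x) \<bullet> (z - Pi *v z)"
    by (simp add: inner_diff_right)
  moreover have "(Pi *v x) \<bullet> (z - Pi *v z) = 0" using a Pi1 by (simp add: mem_oc)
  ultimately show "x \<bullet> (Pi *v z) = (Pi *v x) \<bullet> z" by simp
qed

lemma S_Pi: "S *v (Pi *v x) = S *v x"
proof -
  have "S *v x = S *v (Pi *v x) + S *v (x - Pi *v x)"
    by (simp add: matrix_vector_right_distrib[symmetric])
  then show ?thesis using S2[OF Pi2[of x]] by simp
qed

definition "M = S + (mat 1 - Pi)"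

lemma M_apply: "M *v x = S *v x + (x - Pi *v x)"
  by (simp add: M_def matrix_vector_mult_add_rdistrib matrix_vector_mult_diff_rdistrib)

lemma sum_zero: "a \<in> W \<Longrightarrow> b \<in> orthogonal_comp W \<Longrightarrow> a + b = 0 \<Longrightarrow> a = 0 \<and> b = 0"
proof -
  assume ab: "a \<in> W" "b \<in> orthogonal_comp W" "a + b = 0"
  then have "a = - b" by (simp add: add_eq_0_iff)
  then have "a \<in> orthogonal_comp W" using ab subspace_orthogonal_comp by (metis subspace_neg)
  then have "a = 0" using ab WWc by blast
  then show ?thesis using ab by simp
qed

lemma M_inj: "M *v x = 0 \<Longrightarrow> x = 0"
proof -
  assume "M *v x = 0"
  then have "S *v (Pi *v x) + (x - Pi *v x) = 0" by (simp add: M_apply S_Pi)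
  then have h1: "S *v (Pi *v x) = 0" and h2: "x - Pi *v x = 0" using sum_zero[OF S1 Pi2] by blast+
  have "Pi *v x = 0" using S3[OF Pi1 h1] .
  with h2 show "x = 0" by simp
qed

definition "N = (SOME N. N ** M = mat 1)"

lemma N: "N ** M = mat 1" "M ** N = mat 1"
proof -
  have "\<exists>N. N ** M = mat 1" using M_inj matrix_left_invertible_ker by blast
  then show "N ** M = mat 1" unfolding N_def by (rule someI_ex)
  then show "M ** N = mat 1" using matrix_left_right_inverse by blast
qed

lemma NM: "N *v (M *v x) = x" and MN: "M *v (N *v x) = x"
  using N by (simp_all add: matrix_vector_mul_assoc)

lemma N_W: "w \<in> W \<Longrightarrow> N *v w \<in> W"
proof -
  assume w: "w \<in> W"
  define a where "a = N *v w"
  have "S *v a + (a - Pi *v a) = w" using MN[of w] by (simp add: M_apply a_def)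
  then have "a - Pi *v a = w - S *v a" by (simp add: algebra_simps)
  moreover have "w - S *v a \<in> W" using w S1 sW by (simp add: subspace_diff)
  ultimately have "a - Pi *v a = 0" using Pi2 WWc by metis
  then have "a = Pi *v a" by simp
  then show ?thesis using Pi1 a_def by metis
qed

lemma N_Wc: "v \<in> orthogonal_comp W \<Longrightarrow> N *v v = v"
proof -
  assume v: "v \<in> orthogonal_comp W"
  have "M *v v = v" using S2[OF v] Pi_zero[OF v] by (simp add: M_apply)
  then show ?thesis using NM[of v] by simp
qed

definition "B = N - (mat 1 - Pi)"

lemma B_apply: "B *v x = N *v (Pi *v x)"
proof -
  have "B *v x = N *v x - (x - Pi *v x)"
    by (simp add: B_def matrix_vector_mult_diff_rdistrib)
  also have "N *v x = N *v (Pi *v x) + N *v (x - Pi *v x)"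
    by (simp add: matrix_vector_right_distrib[symmetric])
  also have "N *v (x - Pi *v x) = x - Pi *v x" using N_Wc[OF Pi2] .
  finally show ?thesis by simp
qed

lemma SB: "S ** B = Pi"
proof -
  have "(S ** B) *v x = Pi *v x" for x
  proof -
    have nw: "N *v (Pi *v x) \<in> W" using N_W[OF Pi1] .
    have "(S ** B) *v x = S *v (N *v (Pi *v x))" by (simp add: matrix_vector_mul_assoc[symmetric] B_apply)
    also have "\<dots> = M *v (N *v (Pi *v x)) - (N *v (Pi *v x) - Pi *v (N *v (Pi *v x)))"
      by (simp add: M_apply)
    also have "\<dots> = Pi *v x" using MN Pi_id[OF nw] by simp
    finally show ?thesis .
  qed
  then show ?thesis by (simp add: matrix_eq)
qed

lemma BS: "B ** S = Pi"
proof -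
  have "(B ** S) *v x = Pi *v x" for x
  proof -
    have "(B ** S) *v x = N *v (S *v x)" by (simp add: matrix_vector_mul_assoc[symmetric] B_apply Pi_id[OF S1])
    also have "S *v x = M *v (Pi *v x)" using Pi_id[OF Pi1] by (simp add: M_apply S_Pi)
    finally show ?thesis by (simp add: NM)
  qed
  then show ?thesis by (simp add: matrix_eq)
qed

lemma mp: "mp_inverse S = B"
proof (rule mp_inverse_eq)
  show "S ** B ** S = S" unfolding SB by (simp add: matrix_eq matrix_vector_mul_assoc[symmetric] S_Pi Pi_id[OF S1])
  show "B ** S ** B = B" unfolding BS
    by (simp add: matrix_eq matrix_vector_mul_assoc[symmetric] B_apply Pi_id[OF N_W[OF Pi1]])
  show "transpose (S ** B) = S ** B" unfolding SB by (rule Pi_sym)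
  show "transpose (B ** S) = B ** S" unfolding BS by (rule Pi_sym)
qed

lemma S_mp: "S ** mp_inverse S = Pi" "mp_inverse S ** S = Pi"
  using SB BS mp by simp_all
end
lemma outer_mv: "outer u v *v x = (v \<bullet> x) *\<^sub>R u"
  by (simp add: vec_eq_iff outer_def matrix_vector_mult_def inner_vec_def sum_distrib_left sum_distrib_right ac_simps)

lemma sum_mv: "finite B \<Longrightarrow> (\<Sum>b\<in>B. A b) *v (x::real^'n) = (\<Sum>b\<in>B. A b *v x)"
  by (induct rule: finite_induct) (simp_all add: matrix_vector_mult_add_rdistrib)

lemma orth_proj_exists:
  fixes W :: "(real^'n) set"
  assumes sW: "subspace W"
  obtains Bs where "finite Bs" "Bs \<subseteq> W" "card Bs = dim W" "\<And>b. b \<in> Bs \<Longrightarrow> b \<bullet> b = 1"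
    "\<And>x. (\<Sum>b\<in>Bs. outer b b) *v x \<in> W"
    "\<And>x. x - (\<Sum>b\<in>Bs. outer b b) *v x \<in> orthogonal_comp W"
proof -
  obtain Bs where Bs: "Bs \<subseteq> W" "pairwise orthogonal Bs" "\<And>x. x \<in> Bs \<Longrightarrow> norm x = 1"
    "independent Bs" "card Bs = dim W" "span Bs = W"
    using orthonormal_basis_subspace[OF sW] by metis
  have fin: "finite Bs" using Bs(4) independent_imp_finite by blast
  have one: "b \<bullet> b = 1" if "b \<in> Bs" for b
    using Bs(3)[OF that] by (simp add: norm_eq_sqrt_inner)
  define Pi where "Pi = (\<Sum>b\<in>Bs. outer b b)"
  have Pix: "Pi *v x = (\<Sum>b\<in>Bs. (b \<bullet> x) *\<^sub>R b)" for x
    by (simp add: Pi_def sum_mv[OF fin] outer_mv)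
  have inW: "Pi *v x \<in> W" for x
  proof -
    have "(\<Sum>b\<in>Bs. (b \<bullet> x) *\<^sub>R b) \<in> span Bs"
      by (intro span_sum span_scale span_base)
    then show ?thesis using Pix Bs(6) by simp
  qed
  have orth: "x - Pi *v x \<in> orthogonal_comp W" for x
  proof -
    have ob: "orthogonal (x - Pi *v x) c" if c: "c \<in> Bs" for c
    proof -
      have "(Pi *v x) \<bullet> c = (\<Sum>b\<in>Bs. (b \<bullet> x) * (b \<bullet> c))"
        by (simp add: Pix inner_sum_left)
      also have "\<dots> = (c \<bullet> x) * (c \<bullet> c) + (\<Sum>b\<in>Bs - {c}. (b \<bullet> x) * (b \<bullet> c))"
        using sum.remove[OF fin c] by simp
      also have "(\<Sum>b\<in>Bs - {c}. (b \<bullet> x) * (b \<bullet> c)) = 0"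
      proof (rule sum.neutral, intro ballI)
        fix b assume "b \<in> Bs - {c}"
        then have "b \<bullet> c = 0" using Bs(2) c unfolding pairwise_def orthogonal_def by auto
        then show "(b \<bullet> x) * (b \<bullet> c) = 0" by simp
      qed
      finally have "(Pi *v x) \<bullet> c = c \<bullet> x" using one[OF c] by simp
      then show ?thesis by (simp add: orthogonal_def inner_diff_left inner_diff_right inner_commute)
    qed
    show ?thesis unfolding mem_oc
    proof
      fix y assume "y \<in> W"
      then have "y \<in> span Bs" using Bs(6) by simp
      then have "orthogonal (x - Pi *v x) y" using orthogonal_to_span ob by blast
      then show "y \<bullet> (x - Pi *v x) = 0" by (simp add: orthogonal_def inner_commute)
    qed
  qed
  show ?thesis using that[OF fin Bs(1) Bs(5) one] inW orth unfolding Pi_def by blast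
qed
lemma hexp:
  fixes S :: "real^'n^'n"
  assumes sym: "\<And>u v. u \<bullet> (S *v v) = v \<bullet> (S *v u)"
  shows "(t - g) \<bullet> (S *v (t - g)) = t \<bullet> (S *v t) - 2 * (g \<bullet> (S *v t)) + g \<bullet> (S *v g)"
proof -
  have "(t - g) \<bullet> (S *v (t - g)) = t \<bullet> (S *v t) - t \<bullet> (S *v g) - g \<bullet> (S *v t) + g \<bullet> (S *v g)"
    by (simp add: matrix_vector_mult_diff_distrib inner_diff_left inner_diff_right)
  also have "t \<bullet> (S *v g) = g \<bullet> (S *v t)" by (rule sym)
  finally show ?thesis by simp
qed

locale mainctx =
  fixes W V :: "(real^'n) set" and \<mu> :: "(real^'n) measure" and T :: "real^'n \<Rightarrow> real^'n"
  assumes sW: "subspace W" and sV: "subspace V"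
    and a3: "W \<inter> orthogonal_comp V = {0}" and a4: "W + orthogonal_comp V = UNIV"
    and a5: "prob_frame W \<mu>"
    and mT[measurable]: "T \<in> borel_measurable \<mu>" and TV: "\<forall>x\<in>W. T x \<in> V"
    and a8: "P2 V (distr \<mu> borel T)"
    and a9: "integral\<^sup>L \<mu> (\<lambda>x. outer x (T x)) = oblique_proj W (orthogonal_comp V)"
begin

lemma P2W: "P2 W \<mu>" using a5 by (simp add: prob_frame_def)
lemma sets_eq: "sets \<mu> = sets borel" using P2W by (simp add: P2_def)
lemma aeW: "AE x in \<mu>. x \<in> W" using P2W by (simp add: P2_def)
lemma iW: "integrable \<mu> (\<lambda>x. norm x ^ 2)" using P2W by (simp add: P2_def)
lemma mid[measurable]: "(\<lambda>x. x) \<in> borel_measurable \<mu>" using measurable_ident_sets[OF sets_eq] .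

lemma iT: "integrable \<mu> (\<lambda>x. norm (T x) ^ 2)"
proof -
  have "integrable (distr \<mu> borel T) (\<lambda>x. norm x ^ 2)" using a8 by (simp add: P2_def)
  then show ?thesis using integrable_distr_eq[of T \<mu> borel "\<lambda>x. norm x ^ 2"] by simp
qed

definition "S = frame_operator \<mu>"

lemma SF: "u \<bullet> (S *v v) = (\<integral>y. (y \<bullet> u) * (v \<bullet> y) \<partial>\<mu>)"
proof -
  have "(\<integral>y. y \<bullet> (outer u v *v y) \<partial>\<mu>) = pairm (outer u v) (\<integral>y. outer y y \<partial>\<mu>)"
    using L2X(3)[OF mid mid iW iW] .
  then show ?thesis by (simp add: pairm_outer S_def frame_operator_def outer_mv mult.commute)
qed

lemma Ssym: "u \<bullet> (S *v v) = v \<bullet> (S *v u)"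
  unfolding SF by (simp add: inner_commute mult.commute)

lemma S_int: "u \<bullet> (S *v u) = (\<integral>x. \<bar>x \<bullet> u\<bar> ^ 2 \<partial>\<mu>)"
  unfolding SF by (simp add: inner_commute power2_eq_square)

lemma S_transpose: "transpose S = S"
proof (rule sym_char)
  fix x z :: "real^'n"
  show "x \<bullet> (S *v z) = (S *v x) \<bullet> z" using Ssym[of x z] by (simp add: inner_commute)
qed

lemma ae_zero: "z \<in> orthogonal_comp W \<Longrightarrow> u \<bullet> (S *v z) = 0"
proof -
  assume z: "z \<in> orthogonal_comp W"
  have "AE y in \<mu>. (y \<bullet> u) * (z \<bullet> y) = 0"
    using aeW by eventually_elim (use z in \<open>simp add: mem_oc inner_commute\<close>)
  then show ?thesis unfolding SF by (rule integral_eq_zero_AE)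
qed

lemma S2: "z \<in> orthogonal_comp W \<Longrightarrow> S *v z = 0"
  using ae_zero[of z "S *v z"] by simp

lemma frame_lower: obtains A where "A > 0" "\<And>w. w \<in> W \<Longrightarrow> A * norm w ^ 2 \<le> w \<bullet> (S *v w)"
proof -
  obtain A where A: "A > 0" and h: "\<And>x. x \<in> W \<Longrightarrow> A * norm x ^ 2 \<le> (\<integral>y. \<bar>x \<bullet> y\<bar> ^ 2 \<partial>\<mu>)"
    using a5 unfolding prob_frame_def by blast
  have "A * norm w ^ 2 \<le> w \<bullet> (S *v w)" if w: "w \<in> W" for w
  proof -
    have "(\<lambda>y. \<bar>w \<bullet> y\<bar> ^ 2) = (\<lambda>y. \<bar>y \<bullet> w\<bar> ^ 2)" by (simp add: inner_commute)
    then show ?thesis using h[OF w] S_int[of w] by simp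
  qed
  then show ?thesis using that A by blast
qed

end
lemma oc_orth: "z \<in> orthogonal_comp W \<Longrightarrow> y \<in> W \<Longrightarrow> z \<bullet> y = 0 \<and> y \<bullet> z = 0"
  using mem_oc inner_commute by metis

context mainctx begin

definition "Bs = (SOME Bs. finite Bs \<and> Bs \<subseteq> W \<and> card Bs = dim W \<and> (\<forall>b\<in>Bs. b \<bullet> b = 1) \<and>
    (\<forall>x. (\<Sum>b\<in>Bs. outer b b) *v x \<in> W) \<and> (\<forall>x. x - (\<Sum>b\<in>Bs. outer b b) *v x \<in> orthogonal_comp W))"

lemma Bs: "finite Bs" "Bs \<subseteq> W" "card Bs = dim W" "\<And>b. b \<in> Bs \<Longrightarrow> b \<bullet> b = 1"
    "\<And>x. (\<Sum>b\<in>Bs. outer b b) *v x \<in> W" "\<And>x. x - (\<Sum>b\<in>Bs. outer b b) *v x \<in> orthogonal_comp W"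
proof -
  have "\<exists>Bs. finite Bs \<and> Bs \<subseteq> W \<and> card Bs = dim W \<and> (\<forall>b\<in>Bs. b \<bullet> b = 1) \<and>
    (\<forall>x. (\<Sum>b\<in>Bs. outer b b) *v x \<in> W) \<and> (\<forall>x. x - (\<Sum>b\<in>Bs. outer b b) *v x \<in> orthogonal_comp W)"
    by (rule orth_proj_exists[OF sW]) blast
  then have "finite Bs \<and> Bs \<subseteq> W \<and> card Bs = dim W \<and> (\<forall>b\<in>Bs. b \<bullet> b = 1) \<and>
    (\<forall>x. (\<Sum>b\<in>Bs. outer b b) *v x \<in> W) \<and> (\<forall>x. x - (\<Sum>b\<in>Bs. outer b b) *v x \<in> orthogonal_comp W)"
    unfolding Bs_def by (rule someI_ex)
  then show "finite Bs" "Bs \<subseteq> W" "card Bs = dim W" "\<And>b. b \<in> Bs \<Longrightarrow> b \<bullet> b = 1"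
    "\<And>x. (\<Sum>b\<in>Bs. outer b b) *v x \<in> W" "\<And>x. x - (\<Sum>b\<in>Bs. outer b b) *v x \<in> orthogonal_comp W"
    by blast+
qed

definition "Pr = (\<Sum>b\<in>Bs. outer b b)"

lemma Pi1: "Pr *v x \<in> W" and Pi2: "x - Pr *v x \<in> orthogonal_comp W"
  using Bs(5,6) unfolding Pr_def by auto

lemma S1: "S *v x \<in> W"
proof -
  define z where "z = S *v x - Pr *v (S *v x)"
  have z: "z \<in> orthogonal_comp W" using Pi2 z_def by simp
  have "z \<bullet> (S *v x) = x \<bullet> (S *v z)" by (rule Ssym)
  also have "\<dots> = 0" using S2[OF z] by simp
  finally have 1: "z \<bullet> (S *v x) = 0" .
  have 2: "z \<bullet> (Pr *v (S *v x)) = 0" using oc_orth[OF z Pi1] by blast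
  have "z \<bullet> z = z \<bullet> (S *v x - Pr *v (S *v x))" by (subst (2) z_def) (rule refl)
  also have "\<dots> = 0" using 1 2 by (simp add: inner_diff_right)
  finally have "z \<bullet> z = 0" .
  then have "z = 0" by simp
  then have "S *v x = Pr *v (S *v x)" unfolding z_def by simp
  then show ?thesis using Pi1 by metis
qed

lemma S3: "w \<in> W \<Longrightarrow> S *v w = 0 \<Longrightarrow> w = 0"
proof -
  assume w: "w \<in> W" "S *v w = 0"
  obtain A where A: "A > 0" "\<And>w. w \<in> W \<Longrightarrow> A * norm w ^ 2 \<le> w \<bullet> (S *v w)" using frame_lower by blast
  have "A * norm w ^ 2 \<le> 0" using A(2)[OF w(1)] w(2) by simp
  then have "norm w ^ 2 \<le> 0" using A(1) by (simp add: mult_le_0_iff)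
  then show "w = 0" by simp
qed

sublocale mp: mpctx W S Pr
proof
  show "subspace W" by (fact sW)
  show "\<And>x. Pr *v x \<in> W" by (fact Pi1)
  show "\<And>x. x - Pr *v x \<in> orthogonal_comp W" by (fact Pi2)
  show "\<And>x. S *v x \<in> W" by (fact S1)
  show "\<And>v. v \<in> orthogonal_comp W \<Longrightarrow> S *v v = 0" by (fact S2)
  show "\<And>w. w \<in> W \<Longrightarrow> S *v w = 0 \<Longrightarrow> w = 0" by (fact S3)
qed

lemma sWc: "subspace (orthogonal_comp W)" and sVc: "subspace (orthogonal_comp V)"
  by (simp_all add: subspace_orthogonal_comp)

sublocale P: dsum W "orthogonal_comp V"
proof
  show "subspace W" by (fact sW)
  show "subspace (orthogonal_comp V)" by (fact sVc)
  show "W \<inter> orthogonal_comp V = {0}" by (fact a3)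
  show "W + orthogonal_comp V = UNIV" by (fact a4)
qed

lemma int2: "V \<inter> orthogonal_comp W = {0}"
proof -
  have "v = 0" if v: "v \<in> V" "v \<in> orthogonal_comp W" for v
  proof -
    have "v \<bullet> x = 0" for x
    proof -
      have "v \<bullet> x = v \<bullet> (oblique_proj W (orthogonal_comp V) *v x) + v \<bullet> (x - oblique_proj W (orthogonal_comp V) *v x)"
        by (simp add: inner_diff_right)
      moreover have "v \<bullet> (oblique_proj W (orthogonal_comp V) *v x) = 0"
        using oc_orth[OF v(2) P.op_in(1)[of x]] by blast
      moreover have "v \<bullet> (x - oblique_proj W (orthogonal_comp V) *v x) = 0"
        using v(1) P.op_in(2)[of x] by (simp add: mem_oc)
      ultimately show ?thesis by simp
    qed
    from this[of v] show "v = 0" by simp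
  qed
  then show ?thesis using subspace_0[OF sV] subspace_0[OF sWc] by blast
qed

lemma plus2: "V + orthogonal_comp W = UNIV"
proof -
  have "x \<in> V + orthogonal_comp W" for x
  proof -
    obtain y z where y: "y \<in> span (V \<union> orthogonal_comp W)"
      and z: "\<And>w. w \<in> span (V \<union> orthogonal_comp W) \<Longrightarrow> orthogonal z w" and x: "x = y + z"
      using orthogonal_subspace_decomp_exists by metis
    have zV: "z \<in> orthogonal_comp V"
      unfolding mem_oc
    proof
      fix w assume "w \<in> V"
      then have "w \<in> span (V \<union> orthogonal_comp W)" by (intro span_base) simp
      then have "orthogonal z w" by (rule z)
      then show "w \<bullet> z = 0" by (simp add: orthogonal_def inner_commute)
    qed
    have "z \<in> orthogonal_comp (orthogonal_comp W)"
      unfolding mem_oc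
    proof
      fix w assume "w \<in> orthogonal_comp W"
      then have "w \<in> span (V \<union> orthogonal_comp W)" by (intro span_base) simp
      then have "orthogonal z w" by (rule z)
      then show "w \<bullet> z = 0" by (simp add: orthogonal_def inner_commute)
    qed
    then have zW: "z \<in> W" using orthogonal_comp_self[OF sW] by simp
    have "z = 0" using zV zW a3 by blast
    then have "x = y" using x by simp
    moreover have "y \<in> V + orthogonal_comp W"
    proof -
      have e1: "span V = V" using sV by simp
      have e2: "span (orthogonal_comp W) = orthogonal_comp W" using sWc by simp
      from y obtain a b where "y = a + b" "a \<in> V" "b \<in> orthogonal_comp W"
        unfolding span_Un e1 e2 by blast
      then show ?thesis by (simp add: set_plus_intro)
    qed
    ultimately show ?thesis by simp
  qed
  then show ?thesis by auto
qed

sublocale R: dsum V "orthogonal_comp W"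
proof
  show "subspace V" by (fact sV)
  show "subspace (orthogonal_comp W)" by (fact sWc)
  show "V \<inter> orthogonal_comp W = {0}" by (fact int2)
  show "V + orthogonal_comp W = UNIV" by (fact plus2)
qed

end
lemma inner_vm: "y \<bullet> (z v* A) = (A *v y) \<bullet> (z::real^'n)"
proof -
  have "y \<bullet> (z v* A) = (z v* A) \<bullet> y" by (rule inner_commute)
  also have "\<dots> = z \<bullet> (A *v y)" by (rule dot_lmul_matrix)
  also have "\<dots> = (A *v y) \<bullet> z" by (rule inner_commute)
  finally show ?thesis .
qed

context mainctx begin

definition "Pm = oblique_proj W (orthogonal_comp V)"
definition "Rm = oblique_proj V (orthogonal_comp W)"
definition "Bm = mp_inverse S"
definition "K0 = Rm ** Bm"

lemma Rt: "transpose Rm = Pm"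
proof (rule transpose_char)
  fix x z :: "real^'n"
  have "x \<bullet> (Rm *v z) = (Pm *v x) \<bullet> (Rm *v z) + (x - Pm *v x) \<bullet> (Rm *v z)"
    by (simp add: inner_diff_left)
  moreover have "(x - Pm *v x) \<bullet> (Rm *v z) = 0"
    using oc_orth[OF P.op_in(2)[of x] R.op_in(1)[of z]] unfolding Pm_def Rm_def by blast
  moreover have "(Pm *v x) \<bullet> (Rm *v z) = (Pm *v x) \<bullet> z - (Pm *v x) \<bullet> (z - Rm *v z)"
    by (simp add: inner_diff_right)
  moreover have "(Pm *v x) \<bullet> (z - Rm *v z) = 0"
    using oc_orth[OF R.op_in(2)[of z] P.op_in(1)[of x]] unfolding Pm_def Rm_def by blast
  ultimately show "x \<bullet> (Rm *v z) = (Pm *v x) \<bullet> z" by simp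
qed

lemma Pm_W: "w \<in> W \<Longrightarrow> Pm *v w = w"
  unfolding Pm_def by (rule P.op_eq) (simp_all add: subspace_0[OF sVc])

lemma PS: "Pm ** S = S"
  by (simp add: matrix_eq matrix_vector_mul_assoc[symmetric] Pm_W[OF S1])

lemma SR: "S ** Rm = S"
proof -
  have "transpose (S ** Rm) = S"
    by (simp add: matrix_transpose_mul Rt S_transpose PS)
  then have "transpose (transpose (S ** Rm)) = transpose S" by simp
  then show ?thesis using S_transpose by simp
qed

lemma pairPr: "pairm Pr X = (\<Sum>b\<in>Bs. b \<bullet> (X *v b))"
  by (simp add: Pr_def pairm_sum_left pairm_outer)

lemma sum_Bs: "(\<Sum>b\<in>Bs. b \<bullet> (X *v b)) = real (dim W)" if "\<And>b. b \<in> Bs \<Longrightarrow> X *v b = b"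
proof -
  have "(\<Sum>b\<in>Bs. b \<bullet> (X *v b)) = (\<Sum>b\<in>Bs. 1)"
    by (rule sum.cong) (simp_all add: that Bs(4))
  then show ?thesis using Bs(3) by simp
qed

lemma trPm: "pairm Pr Pm = real (dim W)"
  unfolding pairPr by (rule sum_Bs) (use Bs(2) Pm_W in auto)

lemma trPr: "pairm Pr Pr = real (dim W)"
  unfolding pairPr by (rule sum_Bs) (use Bs(2) mp.Pi_id in auto)

lemma tBS: "transpose Bm ** S = Pr"
proof -
  have "transpose Bm ** S = transpose (transpose S ** Bm)" by (simp add: matrix_transpose_mul)
  also have "\<dots> = transpose (S ** Bm)" by (simp add: S_transpose)
  also have "\<dots> = Pr" by (simp add: Bm_def mp.S_mp mp.Pi_sym)
  finally show ?thesis .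
qed

lemma termb: "pairm (transpose K0 ** S) Pm = real (dim W)"
proof -
  have "pairm (transpose K0 ** S) Pm = pairm S (Rm ** (Bm ** Pm))"
    by (simp add: pairm_transpose_left K0_def matrix_mul_assoc)
  also have "\<dots> = pairm (transpose Rm ** S) (Bm ** Pm)" by (simp add: pairm_transpose_left)
  also have "\<dots> = pairm S (Bm ** Pm)" by (simp add: Rt PS)
  also have "\<dots> = pairm (transpose Bm ** S) Pm" by (simp add: pairm_transpose_left)
  also have "\<dots> = pairm Pr Pm" by (simp add: tBS)
  finally show ?thesis using trPm by simp
qed

lemma termc: "pairm (transpose K0 ** S ** K0) S = real (dim W)"
proof -
  have "transpose K0 ** S ** K0 = transpose Bm ** ((transpose Rm ** S) ** Rm) ** Bm"
    by (simp add: K0_def matrix_transpose_mul matrix_mul_assoc)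
  also have "\<dots> = transpose Bm ** (S ** Bm)" by (simp add: Rt PS SR matrix_mul_assoc)
  finally have e: "transpose K0 ** S ** K0 = transpose Bm ** (S ** Bm)" .
  have "pairm (transpose K0 ** S ** K0) S = pairm (S ** Bm) (Bm ** S)"
    unfolding e by (rule pairm_transpose_left)
  also have "\<dots> = pairm Pr Pr" by (simp add: Bm_def mp.S_mp)
  finally show ?thesis using trPr by simp
qed

definition "f1 y = T y \<bullet> (S *v T y)"
definition "f2 y = y \<bullet> ((transpose K0 ** S) *v T y)"
definition "f3 y = y \<bullet> ((transpose K0 ** S ** K0) *v y)"
definition "hh y = (T y - K0 *v y) \<bullet> (S *v (T y - K0 *v y))"

lemma int_f1: "integrable \<mu> f1"
  unfolding f1_def by (rule L2X(2)[OF mT mT iT iT])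

lemma int_f2: "integrable \<mu> f2" and I_f2: "integral\<^sup>L \<mu> f2 = real (dim W)"
proof -
  show "integrable \<mu> f2" unfolding f2_def by (rule L2X(2)[OF mid mT iW iT])
  have "integral\<^sup>L \<mu> f2 = pairm (transpose K0 ** S) (\<integral>y. outer y (T y) \<partial>\<mu>)"
    unfolding f2_def by (rule L2X(3)[OF mid mT iW iT])
  then show "integral\<^sup>L \<mu> f2 = real (dim W)" using a9 termb by (simp add: Pm_def)
qed

lemma int_f3: "integrable \<mu> f3" and I_f3: "integral\<^sup>L \<mu> f3 = real (dim W)"
proof -
  show "integrable \<mu> f3" unfolding f3_def by (rule L2X(2)[OF mid mid iW iW])
  have "integral\<^sup>L \<mu> f3 = pairm (transpose K0 ** S ** K0) (\<integral>y. outer y y \<partial>\<mu>)"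
    unfolding f3_def by (rule L2X(3)[OF mid mid iW iW])
  then show "integral\<^sup>L \<mu> f3 = real (dim W)" using termc by (simp add: S_def frame_operator_def)
qed

lemma hh_eq: "hh y = f1 y - 2 * f2 y + f3 y"
proof -
  have a: "(K0 *v y) \<bullet> (S *v T y) = f2 y"
    unfolding f2_def by (simp add: matrix_vector_mul_assoc[symmetric] inner_vm)
  have b: "(K0 *v y) \<bullet> (S *v (K0 *v y)) = f3 y"
    unfolding f3_def by (simp add: matrix_vector_mul_assoc[symmetric] inner_vm)
  show ?thesis unfolding hh_def hexp[OF Ssym] a b f1_def ..
qed

lemma int_hh: "integrable \<mu> hh"
  unfolding hh_eq[abs_def] using int_f1 int_f2 int_f3 by simp

lemma I_hh: "integral\<^sup>L \<mu> hh = integral\<^sup>L \<mu> f1 - real (dim W)"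
  unfolding hh_eq[abs_def] using int_f1 int_f2 int_f3 I_f2 I_f3 by simp

lemma hh_nonneg: "0 \<le> hh y"
  unfolding hh_def S_int by simp

lemma hh_zero: "y \<in> W \<Longrightarrow> hh y = 0 \<longleftrightarrow> T y = K0 *v y"
proof
  assume y: "y \<in> W" and h0: "hh y = 0"
  define h where "h = T y - K0 *v y"
  have "K0 *v y \<in> V" unfolding K0_def Rm_def
    by (simp add: matrix_vector_mul_assoc[symmetric] R.op_in(1))
  then have hV: "h \<in> V" using TV y sV unfolding h_def by (simp add: subspace_diff)
  define p where "p = Pr *v h"
  have "p \<bullet> (S *v p) = p \<bullet> (S *v h)" unfolding p_def by (simp add: mp.S_Pi)
  also have "\<dots> = h \<bullet> (S *v p)" by (rule Ssym)
  also have "\<dots> = h \<bullet> (S *v h)" unfolding p_def by (simp add: mp.S_Pi)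
  also have "\<dots> = 0" using h0 unfolding hh_def h_def .
  finally have pp: "p \<bullet> (S *v p) = 0" .
  obtain A where A: "A > 0" "\<And>w. w \<in> W \<Longrightarrow> A * norm w ^ 2 \<le> w \<bullet> (S *v w)" using frame_lower by blast
  have "A * norm p ^ 2 \<le> 0" using A(2)[OF Pi1[of h]] pp unfolding p_def by simp
  then have "norm p ^ 2 \<le> 0" using A(1) by (simp add: mult_le_0_iff)
  then have "p = 0" by simp
  then have "h \<in> orthogonal_comp W" using Pi2[of h] unfolding p_def by simp
  then have "h = 0" using hV int2 by blast
  then show "T y = K0 *v y" unfolding h_def by simp
next
  assume "T y = K0 *v y"
  then show "hh y = 0" unfolding hh_def by simp
qed

lemma main:
  "integral\<^sup>L \<mu> (\<lambda>y. integral\<^sup>L \<mu> (\<lambda>x. \<bar>x \<bullet> T y\<bar> ^ 2)) \<ge> real (dim W) \<and>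
   (integral\<^sup>L \<mu> (\<lambda>y. integral\<^sup>L \<mu> (\<lambda>x. \<bar>x \<bullet> T y\<bar> ^ 2)) = real (dim W) \<longleftrightarrow>
   (AE y in \<mu>. T y = (oblique_proj V (orthogonal_comp W) ** mp_inverse (frame_operator \<mu>)) *v y))"
proof -
  have e: "(\<lambda>y. integral\<^sup>L \<mu> (\<lambda>x. \<bar>x \<bullet> T y\<bar> ^ 2)) = f1"
    by (simp add: fun_eq_iff f1_def S_int)
  have K: "oblique_proj V (orthogonal_comp W) ** mp_inverse (frame_operator \<mu>) = K0"
    by (simp add: K0_def Rm_def Bm_def S_def)
  have I1: "integral\<^sup>L \<mu> f1 = integral\<^sup>L \<mu> hh + real (dim W)" using I_hh by simp
  have nn: "0 \<le> integral\<^sup>L \<mu> hh" by (rule integral_nonneg_AE) (simp add: hh_nonneg)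
  have "integral\<^sup>L \<mu> hh = 0 \<longleftrightarrow> (AE y in \<mu>. hh y = 0)"
    by (rule integral_nonneg_eq_0_iff_AE[OF int_hh]) (simp add: hh_nonneg)
  also have "\<dots> \<longleftrightarrow> (AE y in \<mu>. T y = K0 *v y)"
  proof
    assume "AE y in \<mu>. hh y = 0"
    then show "AE y in \<mu>. T y = K0 *v y" using aeW by eventually_elim (simp add: hh_zero)
  next
    assume "AE y in \<mu>. T y = K0 *v y"
    then show "AE y in \<mu>. hh y = 0" using aeW by eventually_elim (simp add: hh_zero)
  qed
  finally have iff: "integral\<^sup>L \<mu> hh = 0 \<longleftrightarrow> (AE y in \<mu>. T y = K0 *v y)" .
  show ?thesis unfolding e K using I1 nn iff by auto
qed

end

theorem theorem5p3:
  fixes W V :: "(real^'n) set" and \<mu> :: "(real^'n) measure" and T :: "real^'n \<Rightarrow> real^'n"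
  assumes "subspace W" and "subspace V"
    and "W \<inter> orthogonal_comp V = {0}" and "W + orthogonal_comp V = UNIV"
    and "prob_frame W \<mu>"
    and "T \<in> borel_measurable \<mu>" and "\<forall>x\<in>W. T x \<in> V"
    and "P2 V (distr \<mu> borel T)"
    and "integral\<^sup>L \<mu> (\<lambda>x. outer x (T x)) = oblique_proj W (orthogonal_comp V)"
  shows "integral\<^sup>L \<mu> (\<lambda>y. integral\<^sup>L \<mu> (\<lambda>x. \<bar>x \<bullet> T y\<bar> ^ 2)) \<ge> real (dim W) \<and>
         (integral\<^sup>L \<mu> (\<lambda>y. integral\<^sup>L \<mu> (\<lambda>x. \<bar>x \<bullet> T y\<bar> ^ 2)) = real (dim W) \<longleftrightarrow>
         (AE y in \<mu>. T y = (oblique_proj V (orthogonal_comp W) ** mp_inverse (frame_operator \<mu>)) *v y))"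
proof -
  interpret mainctx W V \<mu> T
    using assms by (unfold_locales) auto
  show ?thesis by (rule main)
qed

end
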